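(* For every natural number $k$, the set $\mathbb{R}^+$ of positive real numbers can be written as the union of $k$ pairwise disjoint nonempty subsets, each of which is closed under addition and multiplication. *)

theory Defs
  imports Complex_Main
begin

end

theory Submission
  imports Defs "HOL-Computational_Algebra.Polynomial" "HOL-Library.Countable_Set"
    "HOL-Analysis.Continuum_Not_Denumerable"
begin


definition rsub :: "real set \<Rightarrow> bool" where
  "rsub S \<longleftrightarrow> 0 \<in> S \<and> 1 \<in> S \<and> (\<forall>x\<in>S. \<forall>y\<in>S. x + y \<in> S \<and> x * y \<in> S \<and> - x \<in> S)"

definition isder :: "real set \<Rightarrow> (real \<Rightarrow> real) \<Rightarrow> bool" where
  "isder S D \<longleftrightarrow> (\<forall>x\<in>S. \<forall>y\<in>S. D (x + y) = D x + D y \<and> D (x * y) = x * D y + y * D x)"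

definition polys :: "real set \<Rightarrow> real poly set" where
  "polys S = {p. \<forall>i. coeff p i \<in> S}"

lemma rsubD:
  assumes "rsub S"
  shows "0 \<in> S" "1 \<in> S" "x \<in> S \<Longrightarrow> y \<in> S \<Longrightarrow> x + y \<in> S"
    "x \<in> S \<Longrightarrow> y \<in> S \<Longrightarrow> x * y \<in> S" "x \<in> S \<Longrightarrow> - x \<in> S"
    "x \<in> S \<Longrightarrow> y \<in> S \<Longrightarrow> x - y \<in> S"
  using assms unfolding rsub_def by (simp_all, metis diff_conv_add_uminus)

lemma rsub_sum: "rsub S \<Longrightarrow> (\<And>i. i \<in> A \<Longrightarrow> f i \<in> S) \<Longrightarrow> sum f A \<in> S"
  by (induction A rule: infinite_finite_induct) (auto intro: rsubD)

lemma rsub_nat: "rsub S \<Longrightarrow> of_nat n \<in> S"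
  by (induction n) (auto intro: rsubD)

lemma isder0: "isder S D \<Longrightarrow> 0 \<in> S \<Longrightarrow> D 0 = 0"
  unfolding isder_def by (metis add.right_neutral add_cancel_right_right)

lemma isder1: "isder S D \<Longrightarrow> 1 \<in> S \<Longrightarrow> D 1 = 0"
  unfolding isder_def by (metis mult_1 add_cancel_right_right)

lemma isder_add: "isder S D \<Longrightarrow> x \<in> S \<Longrightarrow> y \<in> S \<Longrightarrow> D (x + y) = D x + D y"
  unfolding isder_def by auto

lemma isder_mult: "isder S D \<Longrightarrow> x \<in> S \<Longrightarrow> y \<in> S \<Longrightarrow> D (x * y) = x * D y + y * D x"
  unfolding isder_def by auto

lemma isder_minus: "isder S D \<Longrightarrow> rsub S \<Longrightarrow> x \<in> S \<Longrightarrow> D (- x) = - D x"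
  using isder_add[of S D x "-x"] isder0[of S D] rsubD[of S] by auto

lemma isder_sum: "isder S D \<Longrightarrow> rsub S \<Longrightarrow> (\<And>i. i \<in> A \<Longrightarrow> f i \<in> S) \<Longrightarrow>
   D (sum f A) = (\<Sum>i\<in>A. D (f i))"
proof (induction A rule: infinite_finite_induct)
  case (infinite A) thus ?case using isder0 rsubD by auto
next
  case empty thus ?case using isder0 rsubD by auto
next
  case (insert x F)
  thus ?case by (simp add: isder_add rsub_sum)
qed

lemma polys_add: "rsub S \<Longrightarrow> p \<in> polys S \<Longrightarrow> q \<in> polys S \<Longrightarrow> p + q \<in> polys S"
  unfolding polys_def by (auto intro: rsubD)
lemma polys_minus: "rsub S \<Longrightarrow> p \<in> polys S \<Longrightarrow> - p \<in> polys S"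
  unfolding polys_def by (auto intro: rsubD)
lemma polys_diff: "rsub S \<Longrightarrow> p \<in> polys S \<Longrightarrow> q \<in> polys S \<Longrightarrow> p - q \<in> polys S"
  unfolding polys_def by (auto intro: rsubD)
lemma polys_mult: "rsub S \<Longrightarrow> p \<in> polys S \<Longrightarrow> q \<in> polys S \<Longrightarrow> p * q \<in> polys S"
  unfolding polys_def by (auto simp: coeff_mult intro!: rsub_sum rsubD)
lemma polys_const: "rsub S \<Longrightarrow> c \<in> S \<Longrightarrow> [:c:] \<in> polys S"
  unfolding polys_def by (auto simp: coeff_pCons split: nat.splits intro: rsubD)
lemma polys_monom: "rsub S \<Longrightarrow> c \<in> S \<Longrightarrow> monom c n \<in> polys S"
  unfolding polys_def by (auto simp: coeff_monom intro: rsubD)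
lemma polys_X: "rsub S \<Longrightarrow> [:0,1:] \<in> polys S"
  unfolding polys_def by (auto simp: coeff_pCons split: nat.splits intro: rsubD)
lemma polys_smult: "rsub S \<Longrightarrow> c \<in> S \<Longrightarrow> p \<in> polys S \<Longrightarrow> smult c p \<in> polys S"
  unfolding polys_def by (auto intro: rsubD)
lemma polys_pderiv: "rsub S \<Longrightarrow> p \<in> polys S \<Longrightarrow> pderiv p \<in> polys S"
  unfolding polys_def by (auto simp: coeff_pderiv intro!: rsubD rsub_nat)
lemma rsub_pow: "rsub S \<Longrightarrow> x \<in> S \<Longrightarrow> x ^ n \<in> S"
  by (induction n) (auto intro: rsubD)

lemma polys_poly: "rsub S \<Longrightarrow> p \<in> polys S \<Longrightarrow> x \<in> S \<Longrightarrow> poly p x \<in> S"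
  unfolding polys_def by (auto simp: poly_altdef intro!: rsub_sum rsubD rsub_pow)

lemma mapD_add: "isder S D \<Longrightarrow> rsub S \<Longrightarrow> p \<in> polys S \<Longrightarrow> q \<in> polys S \<Longrightarrow>
  map_poly D (p + q) = map_poly D p + map_poly D q"
  by (rule poly_eqI) (auto simp: coeff_map_poly isder0 rsubD isder_add polys_def)

lemma mapD_mult: assumes "isder S D" "rsub S" "p \<in> polys S" "q \<in> polys S"
  shows "map_poly D (p * q) = map_poly D p * q + p * map_poly D q"
proof (rule poly_eqI)
  fix n
  have D0: "D 0 = 0" using assms isder0 rsubD by auto
  have "coeff (map_poly D (p * q)) n = D (\<Sum>i\<le>n. coeff p i * coeff q (n-i))"
    by (simp add: coeff_map_poly D0 coeff_mult)
  also have "\<dots> = (\<Sum>i\<le>n. D (coeff p i * coeff q (n-i)))"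
    using assms by (intro isder_sum) (auto simp: polys_def intro: rsubD)
  also have "\<dots> = (\<Sum>i\<le>n. D (coeff p i) * coeff q (n-i) + coeff p i * D (coeff q (n-i)))"
    using assms by (intro sum.cong) (auto simp: polys_def isder_mult)
  also have "\<dots> = coeff (map_poly D p * q + p * map_poly D q) n"
    by (simp add: coeff_mult coeff_map_poly D0 sum.distrib)
  finally show "coeff (map_poly D (p * q)) n = coeff (map_poly D p * q + p * map_poly D q) n" .
qed



definition EE :: "(real \<Rightarrow> real) \<Rightarrow> real \<Rightarrow> real \<Rightarrow> real poly \<Rightarrow> real" where
  "EE D x b q = poly (map_poly D q) x + poly (pderiv q) x * b"

lemma EE_add: "isder S D \<Longrightarrow> rsub S \<Longrightarrow> p \<in> polys S \<Longrightarrow> q \<in> polys S \<Longrightarrow>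
  EE D x b (p + q) = EE D x b p + EE D x b q"
  by (simp add: EE_def mapD_add pderiv_add algebra_simps)

lemma EE_mult: "isder S D \<Longrightarrow> rsub S \<Longrightarrow> p \<in> polys S \<Longrightarrow> q \<in> polys S \<Longrightarrow>
  EE D x b (p * q) = EE D x b p * poly q x + poly p x * EE D x b q"
  by (simp add: EE_def mapD_mult pderiv_mult algebra_simps)

lemma EE_const: "isder S D \<Longrightarrow> rsub S \<Longrightarrow> EE D x b [:c:] = D c"
  using isder0[of S D] rsubD(1)[of S] by (simp add: EE_def map_poly_pCons)

lemma EE_X: "isder S D \<Longrightarrow> rsub S \<Longrightarrow> EE D x b [:0,1:] = b"
  using isder0[of S D] isder1[of S D] rsubD(1,2)[of S] by (simp add: EE_def map_poly_pCons pderiv_pCons)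

lemma EE_0: "isder S D \<Longrightarrow> rsub S \<Longrightarrow> EE D x b 0 = 0"
  using isder0[of S D] rsubD(1)[of S] by (simp add: EE_def)

lemma EE_diff: "isder S D \<Longrightarrow> rsub S \<Longrightarrow> p \<in> polys S \<Longrightarrow> q \<in> polys S \<Longrightarrow>
  EE D x b (p - q) = EE D x b p - EE D x b q"
  using EE_add[of S D "p - q" q x b] polys_diff[of S p q] by simp

lemma EE_smult: "isder S D \<Longrightarrow> rsub S \<Longrightarrow> c \<in> S \<Longrightarrow> q \<in> polys S \<Longrightarrow>
  EE D x b (smult c q) = D c * poly q x + c * EE D x b q"
  using EE_mult[of S D "[:c:]" q x b] EE_const[of S D x b c] polys_const[of S c] by simp

definition good :: "real set \<Rightarrow> (real \<Rightarrow> real) \<Rightarrow> real \<Rightarrow> real \<Rightarrow> bool" where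
  "good S D x b \<longleftrightarrow> (\<forall>q\<in>polys S. poly q x = 0 \<longrightarrow> EE D x b q = 0)"

lemma good_transc: "(\<forall>q\<in>polys S. q \<noteq> 0 \<longrightarrow> poly q x \<noteq> 0) \<Longrightarrow> isder S D \<Longrightarrow> rsub S \<Longrightarrow>
   good S D x b"
  unfolding good_def using EE_0[of S D x b] by auto

lemma good_exists:
  assumes D: "isder S D" and S: "rsub S"
  shows "\<exists>b. good S D x b"
proof (cases "\<forall>q\<in>polys S. q \<noteq> 0 \<longrightarrow> poly q x \<noteq> 0")
  case True thus ?thesis using good_transc D S by blast
next
  case False
  define P where "P = (\<lambda>n. \<exists>q\<in>polys S. q \<noteq> 0 \<and> poly q x = 0 \<and> degree q = n)"
  have "\<exists>n. P n" using False unfolding P_def by blast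
  define d where "d = (LEAST n. P n)"
  have Pd: "P d" unfolding d_def by (rule LeastI_ex) fact
  have dmin: "\<And>q. q \<in> polys S \<Longrightarrow> q \<noteq> 0 \<Longrightarrow> poly q x = 0 \<Longrightarrow> d \<le> degree q"
    unfolding d_def P_def by (rule Least_le) blast
  obtain p where p: "p \<in> polys S" "p \<noteq> 0" "poly p x = 0" "degree p = d"
    using Pd P_def by blast
  have d1: "d \<ge> 1"
  proof (rule ccontr)
    assume "\<not> d \<ge> 1" hence "degree p = 0" using p by simp
    then obtain c where "p = [:c:]" by (metis degree_eq_zeroE)
    thus False using p by simp
  qed
  have pd_ne: "poly (pderiv p) x \<noteq> 0"
  proof
    assume h: "poly (pderiv p) x = 0"
    have "pderiv p \<noteq> 0" using d1 p(4) pderiv_eq_0_iff[of p] by linarith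
    hence "d \<le> degree (pderiv p)" using dmin h polys_pderiv[OF S p(1)] by blast
    thus False using degree_pderiv[of p] p d1 by simp
  qed
  define b where "b = - poly (map_poly D p) x / poly (pderiv p) x"
  have Ep: "EE D x b p = 0" using pd_ne by (simp add: EE_def b_def)
  have main: "\<And>q. q \<in> polys S \<Longrightarrow> poly q x = 0 \<Longrightarrow> EE D x b q = 0"
  proof -
    fix q show "q \<in> polys S \<Longrightarrow> poly q x = 0 \<Longrightarrow> EE D x b q = 0"
    proof (induction "degree q" arbitrary: q rule: less_induct)
      case less
      show ?case
      proof (cases "q = 0")
        case True thus ?thesis using EE_0 D S by simp
      next
        case False
        hence dq: "d \<le> degree q" using dmin less by blast
        define n where "n = degree q"
        define c where "c = lead_coeff p"
        define a where "a = lead_coeff q"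
        have cS: "c \<in> S" "a \<in> S" using p less by (auto simp: c_def a_def polys_def)
        have c0: "c \<noteq> 0" using p(2) unfolding c_def by simp
        define q1 where "q1 = [:c:] * q - monom a (n - d) * p"
        have q1S: "q1 \<in> polys S" unfolding q1_def
          by (intro polys_diff polys_mult polys_const polys_monom S cS less p)
        have q1x: "poly q1 x = 0" using less p by (simp add: q1_def)
        have deg_le: "degree q1 \<le> n"
          unfolding q1_def
        proof (rule degree_diff_le)
          show "degree ([:c:] * q) \<le> n" by (simp add: n_def degree_mult_le)
          have "degree (monom a (n - d) * p) \<le> (n - d) + d"
            using degree_mult_le[of "monom a (n - d)" p] degree_monom_le[of a "n-d"] p(4) by linarith
          thus "degree (monom a (n - d) * p) \<le> n" using dq n_def by simp
        qed
        have cn: "coeff q1 n = 0"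
        proof -
          have "coeff (monom a (n - d) * p) n = a * coeff p d"
            using dq n_def by (simp add: coeff_monom_mult)
          thus ?thesis using p(4) by (simp add: q1_def c_def a_def n_def)
        qed
        have "degree q1 < n"
        proof (cases "q1 = 0")
          case True thus ?thesis using dq d1 n_def by simp
        next
          case False
          hence "coeff q1 (degree q1) \<noteq> 0" by simp
          thus ?thesis using deg_le cn by (cases "degree q1 = n") auto
        qed
        hence E1: "EE D x b q1 = 0" using less q1S q1x n_def by blast
        have "EE D x b q1 = EE D x b ([:c:] * q) - EE D x b (monom a (n - d) * p)"
          unfolding q1_def
          by (rule EE_diff[OF D S]) (intro polys_mult polys_const polys_monom S cS less p)+
        also have "\<dots> = c * EE D x b q"
          using less Ep p
          by (simp add: EE_mult[OF D S] EE_smult[OF D S] polys_const polys_monom S cS EE_const[OF D S])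
        finally show ?thesis using E1 c0 by simp
      qed
    qed
  qed
  thus ?thesis unfolding good_def by blast
qed



lemma extend:
  assumes D: "isder S D" and S: "rsub S" and g: "good S D x b"
  shows "\<exists>S' D'. rsub S' \<and> isder S' D' \<and> S \<subseteq> S' \<and> (\<forall>s\<in>S. D' s = D s) \<and> x \<in> S' \<and> D' x = b
     \<and> S' = (\<lambda>q. poly q x) ` polys S"
proof -
  define S' where "S' = (\<lambda>q. poly q x) ` polys S"
  define D' where "D' = (\<lambda>y. EE D x b (SOME q. q \<in> polys S \<and> poly q x = y))"
  have D'eq: "D' (poly q x) = EE D x b q" if q: "q \<in> polys S" for q
  proof -
    define q0 where "q0 = (SOME r. r \<in> polys S \<and> poly r x = poly q x)"
    have q0: "q0 \<in> polys S \<and> poly q0 x = poly q x"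
      unfolding q0_def by (rule someI_ex) (use q in blast)
    have "EE D x b (q0 - q) = 0"
      using g q0 q polys_diff[OF S] unfolding good_def by auto
    hence "EE D x b q0 = EE D x b q" using EE_diff[OF D S, of q0 q] q0 q by simp
    thus ?thesis unfolding D'_def q0_def by simp
  qed
  have memS': "poly q x \<in> S'" if "q \<in> polys S" for q using that unfolding S'_def by blast
  have "rsub S'"
    unfolding rsub_def
  proof (intro conjI ballI)
    show "0 \<in> S'" using memS'[of 0] by (simp add: polys_def rsubD[OF S])
    show "1 \<in> S'" using memS'[of "[:1:]"] polys_const[OF S rsubD(2)[OF S]] by simp
    fix u v assume "u \<in> S'" "v \<in> S'"
    then obtain p q where p: "p \<in> polys S" "u = poly p x" and q: "q \<in> polys S" "v = poly q x"
      unfolding S'_def by blast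
    show "u + v \<in> S'" using memS'[of "p + q"] polys_add[OF S p(1) q(1)] p q by simp
    show "u * v \<in> S'" using memS'[of "p * q"] polys_mult[OF S p(1) q(1)] p q by simp
    show "- u \<in> S'" using memS'[of "- p"] polys_minus[OF S p(1)] p by simp
  qed
  moreover have "isder S' D'"
    unfolding isder_def
  proof (intro conjI ballI)
    fix u v assume "u \<in> S'" "v \<in> S'"
    then obtain p q where p: "p \<in> polys S" "u = poly p x" and q: "q \<in> polys S" "v = poly q x"
      unfolding S'_def by blast
    have "D' (u + v) = D' (poly (p + q) x)" using p q by simp
    also have "\<dots> = EE D x b (p + q)" using D'eq polys_add[OF S p(1) q(1)] by blast
    also have "\<dots> = D' u + D' v" using EE_add[OF D S p(1) q(1)] D'eq p q by simp
    finally show "D' (u + v) = D' u + D' v" .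
    have "D' (u * v) = D' (poly (p * q) x)" using p q by simp
    also have "\<dots> = EE D x b (p * q)" using D'eq polys_mult[OF S p(1) q(1)] by blast
    also have "\<dots> = u * D' v + v * D' u" using EE_mult[OF D S p(1) q(1)] D'eq p q by simp
    finally show "D' (u * v) = u * D' v + v * D' u" .
  qed
  moreover have "S \<subseteq> S'"
  proof
    fix s assume "s \<in> S" thus "s \<in> S'" using memS'[of "[:s:]"] polys_const[OF S] by simp
  qed
  moreover have "\<forall>s\<in>S. D' s = D s"
  proof
    fix s assume s: "s \<in> S"
    have "D' s = D' (poly [:s:] x)" by simp
    also have "\<dots> = D s" using D'eq[of "[:s:]"] polys_const[OF S s] EE_const[OF D S] by simp
    finally show "D' s = D s" .
  qed
  moreover have "x \<in> S'" using memS'[of "[:0,1:]"] polys_X[OF S] by simp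
  moreover have "D' x = b"
  proof -
    have "D' x = D' (poly [:0,1:] x)" by simp
    also have "\<dots> = b" using D'eq[of "[:0,1:]"] polys_X[OF S] EE_X[OF D S] by simp
    finally show ?thesis .
  qed
  ultimately show ?thesis unfolding S'_def by blast
qed



lemma total_der:
  assumes D0: "isder S0 D0" and S0: "rsub S0"
  shows "\<exists>D. isder UNIV D \<and> (\<forall>s\<in>S0. D s = D0 s)"
proof -
  define A where "A = {G. \<exists>S D. G = (\<lambda>s. (s, D s)) ` S \<and> rsub S \<and> isder S D \<and> S0 \<subseteq> S
                          \<and> (\<forall>s\<in>S0. D s = D0 s)}"
  have "\<exists>M\<in>A. \<forall>X\<in>A. M \<subseteq> X \<longrightarrow> X = M"
  proof (rule Zorn_Lemma2, intro ballI)
    fix C assume C: "C \<in> chains A"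
    have CA: "C \<subseteq> A" and ch: "\<And>G1 G2. G1 \<in> C \<Longrightarrow> G2 \<in> C \<Longrightarrow> G1 \<subseteq> G2 \<or> G2 \<subseteq> G1"
      using C unfolding chains_def chain_subset_def by blast+
    show "\<exists>U\<in>A. \<forall>X\<in>C. X \<subseteq> U"
    proof (cases "C = {}")
      case True
      have "(\<lambda>s. (s, D0 s)) ` S0 \<in> A" unfolding A_def using D0 S0 by blast
      thus ?thesis using True by blast
    next
      case False
      define U where "U = \<Union>C"
      have two: "\<exists>G\<in>C. a \<in> G \<and> b \<in> G" if ab: "a \<in> U" "b \<in> U" for a b
      proof -
        obtain G1 G2 where "G1 \<in> C" "G2 \<in> C" "a \<in> G1" "b \<in> G2" using ab U_def by blast
        thus ?thesis using ch[of G1 G2] by blast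
      qed
      have func: "y = z" if syz: "(s, y) \<in> U" "(s, z) \<in> U" for s y z
      proof -
        obtain G where G: "G \<in> C" "(s,y) \<in> G" "(s,z) \<in> G" using two syz by blast
        then obtain S D where "G = (\<lambda>s. (s, D s)) ` S" using CA A_def by blast
        thus ?thesis using G by auto
      qed
      define SU where "SU = fst ` U"
      define DU where "DU = (\<lambda>s. SOME y. (s, y) \<in> U)"
      have inU: "(s, DU s) \<in> U" if "s \<in> SU" for s
        unfolding DU_def by (rule someI_ex) (use that SU_def in force)
      have graph: "U = (\<lambda>s. (s, DU s)) ` SU"
      proof
        show "U \<subseteq> (\<lambda>s. (s, DU s)) ` SU"
        proof
          fix a assume a: "a \<in> U"
          obtain s y where sy: "a = (s, y)" by force
          have "s \<in> SU" using a sy SU_def by force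
          hence "y = DU s" using func[of s y "DU s"] inU a sy by blast
          thus "a \<in> (\<lambda>s. (s, DU s)) ` SU" using \<open>s \<in> SU\<close> sy by blast
        qed
        show "(\<lambda>s. (s, DU s)) ` SU \<subseteq> U" using inU by blast
      qed
      have local: "\<exists>S D. rsub S \<and> isder S D \<and> S0 \<subseteq> S \<and> (\<forall>s\<in>S0. D s = D0 s) \<and> S \<subseteq> SU
          \<and> (\<forall>s\<in>S. DU s = D s) \<and> a \<in> S \<and> b \<in> S" if ab: "a \<in> SU" "b \<in> SU" for a b
      proof -
        obtain G where G: "G \<in> C" "(a, DU a) \<in> G" "(b, DU b) \<in> G" using two inU ab by blast
        then obtain S D where SD: "G = (\<lambda>s. (s, D s)) ` S" "rsub S" "isder S D" "S0 \<subseteq> S"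
            "\<forall>s\<in>S0. D s = D0 s" using CA A_def by blast
        have GU: "G \<subseteq> U" using G U_def by blast
        have "S \<subseteq> SU"
        proof
          fix s assume "s \<in> S"
          hence "(s, D s) \<in> U" using GU SD(1) by blast
          thus "s \<in> SU" unfolding SU_def by (metis fst_conv image_eqI)
        qed
        moreover have "\<forall>s\<in>S. DU s = D s"
        proof
          fix s assume "s \<in> S"
          hence "(s, D s) \<in> U" using GU SD(1) by blast
          moreover have "(s, DU s) \<in> U" using inU \<open>S \<subseteq> SU\<close> \<open>s \<in> S\<close> by blast
          ultimately show "DU s = D s" using func by blast
        qed
        moreover have "a \<in> S" "b \<in> S" using G SD(1) by auto
        ultimately show ?thesis using SD by blast
      qed
      obtain G0 where "G0 \<in> C" using False by blast
      then obtain S1 D1 where S1: "G0 = (\<lambda>s. (s, D1 s)) ` S1" "S0 \<subseteq> S1" using CA A_def by blast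
      have "S0 \<subseteq> SU"
      proof
        fix s assume "s \<in> S0"
        hence "(s, D1 s) \<in> U" using S1 \<open>G0 \<in> C\<close> U_def by blast
        thus "s \<in> SU" unfolding SU_def by (metis fst_conv image_eqI)
      qed
      have "rsub SU"
        unfolding rsub_def
      proof (intro conjI ballI)
        show "0 \<in> SU" "1 \<in> SU" using \<open>S0 \<subseteq> SU\<close> rsubD[OF S0] by auto
        fix a b assume "a \<in> SU" "b \<in> SU"
        then obtain S D where L: "rsub S" "S \<subseteq> SU" "a \<in> S" "b \<in> S" using local by blast
        show "a + b \<in> SU" using rsubD(3)[OF L(1,3,4)] L(2) by blast
        show "a * b \<in> SU" using rsubD(4)[OF L(1,3,4)] L(2) by blast
        show "- a \<in> SU" using rsubD(5)[OF L(1,3)] L(2) by blast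
      qed
      moreover have "isder SU DU"
        unfolding isder_def
      proof (intro conjI ballI)
        fix a b assume "a \<in> SU" "b \<in> SU"
        then obtain S D where L: "rsub S" "isder S D" "S \<subseteq> SU" "\<forall>s\<in>S. DU s = D s" "a \<in> S" "b \<in> S"
          using local by blast
        have "DU (a + b) = D (a + b)" using L(4) rsubD(3)[OF L(1,5,6)] by blast
        also have "\<dots> = D a + D b" using isder_add[OF L(2,5,6)] .
        finally show "DU (a + b) = DU a + DU b" using L(4,5,6) by simp
        have "DU (a * b) = D (a * b)" using L(4) rsubD(4)[OF L(1,5,6)] by blast
        also have "\<dots> = a * D b + b * D a" using isder_mult[OF L(2,5,6)] .
        finally show "DU (a * b) = a * DU b + b * DU a" using L(4,5,6) by simp
      qed
      moreover have "\<forall>s\<in>S0. DU s = D0 s"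
      proof
        fix s assume "s \<in> S0"
        hence "s \<in> SU" using \<open>S0 \<subseteq> SU\<close> by blast
        then obtain S D where L: "S0 \<subseteq> S" "\<forall>s\<in>S0. D s = D0 s" "\<forall>s\<in>S. DU s = D s"
          using local[of s s] by blast
        have "s \<in> S" using L(1) \<open>s \<in> S0\<close> by blast
        thus "DU s = D0 s" using \<open>s \<in> S0\<close> L(2,3) by simp
      qed
      ultimately have "U \<in> A" unfolding A_def using graph \<open>S0 \<subseteq> SU\<close> by blast
      moreover have "\<forall>X\<in>C. X \<subseteq> U" unfolding U_def by blast
      ultimately show ?thesis by blast
    qed
  qed
  then obtain M where M: "M \<in> A" and Mmax: "\<forall>X\<in>A. M \<subseteq> X \<longrightarrow> X = M" by blast
  then obtain S D where SD: "M = (\<lambda>s. (s, D s)) ` S" "rsub S" "isder S D" "S0 \<subseteq> S"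
      "\<forall>s\<in>S0. D s = D0 s" unfolding A_def by blast
  have "S = UNIV"
  proof (rule ccontr)
    assume "S \<noteq> UNIV"
    then obtain x where x: "x \<notin> S" by blast
    obtain b where "good S D x b" using good_exists[OF SD(3,2)] by blast
    then obtain S' D' where E: "rsub S'" "isder S' D'" "S \<subseteq> S'" "\<forall>s\<in>S. D' s = D s" "x \<in> S'"
      using extend[OF SD(3,2)] by blast
    define G' where "G' = (\<lambda>s. (s, D' s)) ` S'"
    have "\<forall>s\<in>S0. D' s = D0 s" using E(4) SD(4,5) by auto
    moreover have "S0 \<subseteq> S'" using SD(4) E(3) by blast
    ultimately have "G' \<in> A" unfolding A_def G'_def using E(1,2) by blast
    moreover have "M \<subseteq> G'"
    proof
      fix a assume "a \<in> M"
      then obtain s where "s \<in> S" "a = (s, D s)" using SD(1) by blast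
      thus "a \<in> G'" unfolding G'_def using E(3,4) by force
    qed
    ultimately have "G' = M" using Mmax by blast
    hence "(x, D' x) \<in> M" using E G'_def by blast
    thus False using SD(1) x by (simp add: image_iff)
  qed
  thus ?thesis using SD by blast
qed



lemma countable_polys: assumes "countable S" shows "countable (polys S)"
proof -
  have "polys S \<subseteq> Poly ` lists S"
  proof
    fix p assume p: "p \<in> polys S"
    have "set (coeffs p) \<subseteq> S"
    proof
      fix c assume "c \<in> set (coeffs p)"
      hence "c \<in> range (coeff p)" using range_coeff[of p] by blast
      then obtain i where "c = coeff p i" by blast
      thus "c \<in> S" using p unfolding polys_def by simp
    qed
    hence "coeffs p \<in> lists S" by blast
    thus "p \<in> Poly ` lists S" by (metis Poly_coeffs image_eqI)
  qed
  moreover have "countable (Poly ` lists S)" by (intro countable_image countable_lists assms)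
  ultimately show ?thesis by (rule countable_subset)
qed

lemma transc_exists:
  assumes "countable S"
  shows "\<exists>x>0. \<forall>q\<in>polys S. q \<noteq> 0 \<longrightarrow> poly q x \<noteq> 0"
proof -
  define R where "R = (\<Union>q\<in>polys S - {0}. {x. poly q x = 0})"
  have cp: "countable (polys S - {0})" using countable_polys[OF assms] by simp
  have "countable R" unfolding R_def
  proof (rule countable_UN[OF cp])
    fix q assume "q \<in> polys S - {0}"
    hence "finite {x. poly q x = 0}" using poly_roots_finite by blast
    thus "countable {x. poly q x = 0}" by (rule countable_finite)
  qed
  moreover have "uncountable {0<..<(1::real)}" using uncountable_open_interval by simp
  ultimately have "\<not> {0<..<(1::real)} \<subseteq> R" using countable_subset by blast
  then obtain x where "x \<in> {0<..<(1::real)}" "x \<notin> R" by blast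
  thus ?thesis unfolding R_def by auto
qed

lemma rsub_Ints: "rsub \<int>"
  unfolding rsub_def by (simp add: Ints_add Ints_mult Ints_minus)

lemma zero_der: "isder S (\<lambda>_. 0)"
  unfolding isder_def by simp

lemma buildup:
  fixes n :: nat
  shows "\<exists>S t. rsub S \<and> countable S \<and> (\<forall>j<n. t j \<in> S \<and> 0 < t j) \<and>
     (\<forall>i<n. \<exists>D. isder S D \<and> (\<forall>j<n. D (t j) = (if i = j then 1 else 0)))"
proof (induction n)
  case 0
  show ?case using rsub_Ints countable_int by blast
next
  case (Suc n)
  then obtain S t where S: "rsub S" "countable S" "\<forall>j<n. t j \<in> S \<and> 0 < t j"
    and Ds: "\<forall>i<n. \<exists>D. isder S D \<and> (\<forall>j<n. D (t j) = (if i = j then 1 else 0))" by blast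
  obtain x where x: "x > 0" "\<forall>q\<in>polys S. q \<noteq> 0 \<longrightarrow> poly q x \<noteq> 0"
    using transc_exists[OF S(2)] by blast
  define S' where "S' = (\<lambda>q. poly q x) ` polys S"
  define t' where "t' = t(n := x)"
  have ext: "\<exists>D'. isder S' D' \<and> (\<forall>s\<in>S. D' s = D s) \<and> D' x = b \<and> rsub S' \<and> S \<subseteq> S' \<and> x \<in> S'"
    if D: "isder S D" for D b
    using extend[OF D S(1) good_transc[OF x(2) D S(1)]] unfolding S'_def by blast
  obtain D1 where D1: "isder S' D1" "rsub S'" "S \<subseteq> S'" "x \<in> S'"
    using ext[OF zero_der, of 0] by blast
  have "countable S'" unfolding S'_def using countable_polys[OF S(2)] by blast
  moreover have "\<forall>j<Suc n. t' j \<in> S' \<and> 0 < t' j"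
    using S(3) D1(3,4) x(1) unfolding t'_def by (auto simp: less_Suc_eq)
  moreover have "\<forall>i<Suc n. \<exists>D. isder S' D \<and> (\<forall>j<Suc n. D (t' j) = (if i = j then 1 else 0))"
  proof (intro allI impI)
    fix i assume i: "i < Suc n"
    show "\<exists>D. isder S' D \<and> (\<forall>j<Suc n. D (t' j) = (if i = j then 1 else 0))"
    proof (cases "i = n")
      case True
      obtain D' where D': "isder S' D'" "\<forall>s\<in>S. D' s = 0" "D' x = 1"
        using ext[OF zero_der, of 1] by blast
      have "\<forall>j<Suc n. D' (t' j) = (if i = j then 1 else 0)"
        using D' S(3) True unfolding t'_def by (auto simp: less_Suc_eq)
      thus ?thesis using D' by blast
    next
      case False
      hence "i < n" using i by simp
      then obtain D where D: "isder S D" "\<forall>j<n. D (t j) = (if i = j then 1 else 0)" using Ds by blast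
      obtain D' where D': "isder S' D'" "\<forall>s\<in>S. D' s = D s" "D' x = 0"
        using ext[OF D(1), of 0] by blast
      have "\<forall>j<Suc n. D' (t' j) = (if i = j then 1 else 0)"
        using D' D(2) S(3) \<open>i < n\<close> unfolding t'_def by (auto simp: less_Suc_eq)
      thus ?thesis using D' by blast
    qed
  qed
  ultimately show ?case using D1(2) by blast
qed

lemma lexlemma:
  fixes u v :: "nat \<Rightarrow> real"
  assumes u: "\<forall>i<m. (\<forall>l<i. u l = 0) \<longrightarrow> u i \<le> 0"
    and v: "\<forall>i<m. (\<forall>l<i. v l = 0) \<longrightarrow> v i \<le> 0"
    and a: "a > 0" and b: "b > 0"
  shows "\<forall>i<m. (\<forall>l<i. a * u l + b * v l = 0) \<longrightarrow> a * u i + b * v i \<le> 0"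
proof (intro allI impI)
  fix i assume i: "i < m" and z: "\<forall>l<i. a * u l + b * v l = 0"
  have zz: "\<forall>l'<l. u l' = 0 \<and> v l' = 0" if "l \<le> i" for l
    using that
  proof (induction l)
    case 0 thus ?case by simp
  next
    case (Suc l)
    hence IH: "\<forall>l'<l. u l' = 0 \<and> v l' = 0" by simp
    have "l < m" using Suc.prems i by simp
    hence "u l \<le> 0" "v l \<le> 0" using u v IH by auto
    moreover have "a * u l + b * v l = 0" using z Suc.prems by simp
    moreover have "a * u l \<le> 0" using a \<open>u l \<le> 0\<close> by (simp add: mult_nonneg_nonpos)
    moreover have "b * v l \<le> 0" using b \<open>v l \<le> 0\<close> by (simp add: mult_nonneg_nonpos)
    ultimately have "a * u l = 0 \<and> b * v l = 0" by linarith
    hence "u l = 0 \<and> v l = 0" using a b by simp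
    thus ?case using IH less_Suc_eq by auto
  qed
  have z2: "\<forall>l'<i. u l' = 0 \<and> v l' = 0" using zz[OF order_refl] .
  have "u i \<le> 0" using u i z2 by blast
  moreover have "v i \<le> 0" using v i z2 by blast
  ultimately have "u i \<le> 0 \<and> v i \<le> 0" by simp
  hence "u i \<le> 0" "v i \<le> 0" by auto
  thus "a * u i + b * v i \<le> 0" using a b
    by (simp add: add_nonpos_nonpos mult_nonneg_nonpos)
qed



theorem theorem1p1:
  fixes k :: nat
  assumes "k \<ge> 1"
  shows "\<exists>A :: nat \<Rightarrow> real set.
           (\<Union>i<k. A i) = {x. x > 0} \<and>
           (\<forall>i<k. A i \<noteq> {}) \<and>
           (\<forall>i<k. \<forall>j<k. i \<noteq> j \<longrightarrow> A i \<inter> A j = {}) \<and>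
           (\<forall>i<k. \<forall>x\<in>A i. \<forall>y\<in>A i. x + y \<in> A i \<and> x * y \<in> A i)"
proof -
  define m where "m = k - 1"
  have km: "k = Suc m" using assms m_def by simp
  obtain S t where S: "rsub S" "\<forall>j<m. t j \<in> S \<and> 0 < t j"
    and Ds: "\<forall>i<m. \<exists>D. isder S D \<and> (\<forall>j<m. D (t j) = (if i = j then 1 else 0))"
    using buildup[of m] by blast
  have "\<forall>i\<in>{..<m}. \<exists>D. isder UNIV D \<and> (\<forall>j<m. D (t j) = (if i = j then 1 else 0))"
  proof
    fix i assume "i \<in> {..<m}"
    then obtain D0 where D0: "isder S D0" "\<forall>j<m. D0 (t j) = (if i = j then 1 else 0)"
      using Ds by auto
    obtain D where D: "isder UNIV D" "\<forall>s\<in>S. D s = D0 s" using total_der[OF D0(1) S(1)] by blast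
    have "\<forall>j<m. D (t j) = (if i = j then 1 else 0)" using D(2) D0(2) S(2) by simp
    thus "\<exists>D. isder UNIV D \<and> (\<forall>j<m. D (t j) = (if i = j then 1 else 0))" using D(1) by blast
  qed
  from bchoice[OF this] obtain Dv where
    Dv: "\<forall>i\<in>{..<m}. isder UNIV (Dv i) \<and> (\<forall>j<m. Dv i (t j) = (if i = j then 1 else 0))"
    by (elim exE)
  have isd: "isder UNIV (Dv i)" if "i < m" for i
    using Dv that by simp
  have Dadd: "Dv i (x + y) = Dv i x + Dv i y" if "i < m" for i x y
    using isder_add[OF isd[OF that]] by simp
  have Dmult: "Dv i (x * y) = x * Dv i y + y * Dv i x" if "i < m" for i x y
    using isder_mult[OF isd[OF that]] by simp
  have Dt: "Dv i (t j) = (if i = j then 1 else 0)" if "i < m" "j < m" for i j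
    using Dv that by simp
  have D1: "Dv i 1 = 0" if "i < m" for i
    using isder1[OF isd[OF that]] by simp
  define P where "P = (\<lambda>x. \<forall>i<m. (\<forall>l<i. Dv l x = 0) \<longrightarrow> Dv i x \<le> 0)"
  define A where "A = (\<lambda>i. if i < m then {x. x > 0 \<and> (\<forall>l<i. Dv l x = 0) \<and> Dv i x > 0}
                            else {x. x > 0 \<and> P x})"
  have pos: "x > 0" if "x \<in> A i" for x i using that unfolding A_def by (auto split: if_splits)
  have U: "(\<Union>i<k. A i) = {x. x > 0}"
  proof (rule set_eqI, rule iffI)
    fix x assume "x \<in> (\<Union>i<k. A i)" thus "x \<in> {x. x > 0}" using pos by blast
  next
    fix x assume "x \<in> {x. x > (0::real)}"
    hence x: "x > 0" by simp
    show "x \<in> (\<Union>i<k. A i)"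
    proof (cases "P x")
      case True
      hence "x \<in> A m" unfolding A_def using x by simp
      thus ?thesis using km by blast
    next
      case False
      then obtain i where i: "i < m" "\<forall>l<i. Dv l x = 0" "\<not> Dv i x \<le> 0" unfolding P_def by blast
      hence "x \<in> A i" unfolding A_def using x by simp
      thus ?thesis using i km by auto
    qed
  qed
  have NE: "\<forall>i<k. A i \<noteq> {}"
  proof (intro allI impI)
    fix i assume i: "i < k"
    show "A i \<noteq> {}"
    proof (cases "i < m")
      case True
      have "\<forall>l<i. Dv l (t i) = 0" using Dt True by auto
      moreover have "Dv i (t i) > 0" using Dt True by simp
      ultimately have "t i \<in> A i" unfolding A_def using True S(2) by simp
      thus ?thesis by blast
    next
      case False
      have "P 1" unfolding P_def using D1 by simp
      hence "1 \<in> A i" unfolding A_def using False by simp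
      thus ?thesis by blast
    qed
  qed
  have disj0: "A i \<inter> A j = {}" if ij: "i < j" "j < k" for i j
  proof -
    have im: "i < m" using ij km by simp
    show ?thesis
    proof (rule ccontr)
      assume "A i \<inter> A j \<noteq> {}"
      then obtain x where xi: "x \<in> A i" and xj: "x \<in> A j" by blast
      have xi': "\<forall>l<i. Dv l x = 0" "Dv i x > 0" using xi im unfolding A_def by auto
      show False
      proof (cases "j < m")
        case True
        hence "Dv i x = 0" using xj ij unfolding A_def by auto
        thus False using xi' by simp
      next
        case False
        hence "P x" using xj unfolding A_def by simp
        hence "Dv i x \<le> 0" using xi' im unfolding P_def by blast
        thus False using xi' by simp
      qed
    qed
  qed
  have D: "\<forall>i<k. \<forall>j<k. i \<noteq> j \<longrightarrow> A i \<inter> A j = {}"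
  proof (intro allI impI)
    fix i j assume "i < k" "j < k" "i \<noteq> j"
    thus "A i \<inter> A j = {}"
      using disj0[of i j] disj0[of j i] by (cases "i < j") (auto simp: Int_commute)
  qed
  have CL: "\<forall>i<k. \<forall>x\<in>A i. \<forall>y\<in>A i. x + y \<in> A i \<and> x * y \<in> A i"
  proof (intro allI impI ballI)
    fix i x y assume i: "i < k" and x: "x \<in> A i" and y: "y \<in> A i"
    have xp: "x > 0" and yp: "y > 0" using pos x y by auto
    show "x + y \<in> A i \<and> x * y \<in> A i"
    proof (cases "i < m")
      case True
      have hx: "\<forall>l<i. Dv l x = 0" "Dv i x > 0" using x True unfolding A_def by auto
      have hy: "\<forall>l<i. Dv l y = 0" "Dv i y > 0" using y True unfolding A_def by auto
      have "\<forall>l<i. Dv l (x + y) = 0"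
      proof (intro allI impI)
        fix l assume "l < i" thus "Dv l (x + y) = 0" using hx hy Dadd[of l x y] True by simp
      qed
      moreover have "Dv i (x + y) > 0" using hx hy Dadd[OF True] by simp
      moreover have "\<forall>l<i. Dv l (x * y) = 0"
      proof (intro allI impI)
        fix l assume "l < i" thus "Dv l (x * y) = 0" using hx hy Dmult[of l x y] True by simp
      qed
      moreover have "Dv i (x * y) > 0"
        using hx hy Dmult[OF True] xp yp by (simp add: add_pos_pos)
      ultimately show ?thesis unfolding A_def using True xp yp by simp
    next
      case False
      have Px: "P x" and Py: "P y" using x y False unfolding A_def by auto
      have L1: "\<forall>i<m. (\<forall>l<i. 1 * Dv l x + 1 * Dv l y = 0) \<longrightarrow> 1 * Dv i x + 1 * Dv i y \<le> 0"
        by (rule lexlemma) (use Px Py in \<open>auto simp: P_def\<close>)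
      have L2: "\<forall>i<m. (\<forall>l<i. y * Dv l x + x * Dv l y = 0) \<longrightarrow> y * Dv i x + x * Dv i y \<le> 0"
        by (rule lexlemma) (use Px Py xp yp in \<open>auto simp: P_def\<close>)
      have "P (x + y)" unfolding P_def
      proof (intro allI impI)
        fix j assume j: "j < m" and z: "\<forall>l<j. Dv l (x + y) = 0"
        have "\<forall>l<j. 1 * Dv l x + 1 * Dv l y = 0"
        proof (intro allI impI)
          fix l assume "l < j" thus "1 * Dv l x + 1 * Dv l y = 0" using z j Dadd[of l x y] by simp
        qed
        hence "1 * Dv j x + 1 * Dv j y \<le> 0" using L1 j by blast
        thus "Dv j (x + y) \<le> 0" using Dadd[OF j] by simp
      qed
      moreover have "P (x * y)" unfolding P_def
      proof (intro allI impI)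
        fix j assume j: "j < m" and z: "\<forall>l<j. Dv l (x * y) = 0"
        have "\<forall>l<j. y * Dv l x + x * Dv l y = 0"
        proof (intro allI impI)
          fix l assume "l < j" thus "y * Dv l x + x * Dv l y = 0"
            using z j Dmult[of l x y] by (simp add: add.commute)
        qed
        hence "y * Dv j x + x * Dv j y \<le> 0" using L2 j by blast
        thus "Dv j (x * y) \<le> 0" using Dmult[OF j] by (simp add: add.commute)
      qed
      ultimately show ?thesis unfolding A_def using False xp yp by simp
    qed
  qed
  show ?thesis using U NE D CL by blast
qed

end
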